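(* Let $(X,A,Y)$ be jointly distributed with $A,Y\in\{0,1\}$, and assume there exist deterministic functions $f_Y^*,f_A^*$ with $Y=f_Y^*(X)$ and $A=f_A^*(X)$. Let $\Delta_{Y\mid A}:=|\Pr(Y=1\mid A=0)-\Pr(Y=1\mid A=1)|$ and let $\ell(y,y')=-y\log y'-(1-y)\log(1-y')$ be the cross-entropy loss. Let $Z=g(X)$ be any (possibly randomized) representation. If $I(Z;A)=0$, then $$\inf_h\mathbb{E}[\ell(Y,h(Z))]\ge \Delta_{Y\mid A}\cdot H(A).$$ If $I(Y;Z)=H(Y)$, then $$\inf_h\mathbb{E}[\ell(A,h(Z))]\le H(A\mid Y).$$ Here the infima are over all (possibly randomized) predictors $h$ mapping $Z$ to $[0,1]$.
   Context: A (possibly randomized) representation is $Z=g(X,S)$ for a measurable $g$ and auxiliary randomness $S$ independent of $(X,A,Y)$. $H$ denotes Shannon entropy (with the same logarithm base as in $\ell$), $I$ mutual information. *)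

theory Defs
  imports "HOL-Probability.Probability"
begin

text \<open>Values are in ennreal so that log 0 = -infinity is treated correctly
  (with the convention 0 * log 0 = 0).\<close>
definition ce_loss :: "real \<Rightarrow> bool \<Rightarrow> real \<Rightarrow> ennreal" where
  "ce_loss b y t =
     (if y then (if t \<le> 0 then \<infinity> else ennreal (- log b t))
      else (if 1 \<le> t then \<infinity> else ennreal (- log b (1 - t))))"

text \<open>(Possibly randomized) predictors from Z to [0,1]: Markov kernels from the
  space of Z to probability measures on the reals concentrated on [0,1].
  Deterministic predictors are the Dirac kernels.\<close>
definition rand_predictors :: "'z measure \<Rightarrow> ('z \<Rightarrow> real measure) set" where
  "rand_predictors MZ =
     {h. h \<in> MZ \<rightarrow>\<^sub>M subprob_algebra borel \<and>
         (\<forall>z\<in>space MZ. prob_space (h z) \<and> emeasure (h z) {0..1} = 1)}"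

definition exp_loss ::
  "'w measure \<Rightarrow> real \<Rightarrow> ('w \<Rightarrow> bool) \<Rightarrow> ('w \<Rightarrow> 'z) \<Rightarrow> ('z \<Rightarrow> real measure) \<Rightarrow> ennreal" where
  "exp_loss M b L Z h = (\<integral>\<^sup>+ \<omega>. (\<integral>\<^sup>+ t. ce_loss b (L \<omega>) t \<partial>(h (Z \<omega>))) \<partial>M)"

definition Delta_YA :: "'w measure \<Rightarrow> ('w \<Rightarrow> bool) \<Rightarrow> ('w \<Rightarrow> bool) \<Rightarrow> real" where
  "Delta_YA M A Y = \<bar>cond_prob M (\<lambda>\<omega>. Y \<omega>) (\<lambda>\<omega>. \<not> A \<omega>) - cond_prob M (\<lambda>\<omega>. Y \<omega>) (\<lambda>\<omega>. A \<omega>)\<bar>"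

end

theory Submission
  imports Defs
begin

lemma cp_density:
  assumes P: "prob_space M" and Z[measurable]: "Z \<in> M \<rightarrow>\<^sub>M MZ"
    and B[measurable]: "S \<in> sets M"
  obtains r where "r \<in> borel_measurable MZ" "\<And>z. 0 \<le> r z \<and> r z \<le> 1"
    "\<And>\<phi>. \<phi> \<in> borel_measurable MZ \<Longrightarrow>
       (\<integral>\<^sup>+\<omega>. indicator S \<omega> * \<phi> (Z \<omega>) \<partial>M) = (\<integral>\<^sup>+z. ennreal (r z) * \<phi> z \<partial>distr M MZ Z)"
    "\<And>\<phi>. \<phi> \<in> borel_measurable MZ \<Longrightarrow>
       (\<integral>\<^sup>+\<omega>. indicator (space M - S) \<omega> * \<phi> (Z \<omega>) \<partial>M) = (\<integral>\<^sup>+z. ennreal (1 - r z) * \<phi> z \<partial>distr M MZ Z)"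
proof -
  interpret prob_space M by fact
  define \<mu> where "\<mu> = distr M MZ Z"
  interpret mu: prob_space \<mu> unfolding \<mu>_def by (rule prob_space_distr) simp
  have sets_mu[simp]: "sets \<mu> = sets MZ" "space \<mu> = space MZ" unfolding \<mu>_def by auto
  have bm: "borel_measurable \<mu> = borel_measurable MZ" by (rule measurable_cong_sets) auto
  define \<nu> where "\<nu> T = distr (density M (indicator T)) MZ Z" for T
  have S0[measurable]: "space M - S \<in> sets M" by auto
  have int\<nu>: "(\<integral>\<^sup>+z. \<phi> z \<partial>\<nu> T) = (\<integral>\<^sup>+\<omega>. indicator T \<omega> * \<phi> (Z \<omega>) \<partial>M)"
    if [measurable]: "T \<in> sets M" "\<phi> \<in> borel_measurable MZ" for T \<phi>
    unfolding \<nu>_def by (simp add: nn_integral_distr nn_integral_density)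
  have ac: "absolutely_continuous \<mu> (\<nu> T)" if [measurable]: "T \<in> sets M" for T
    unfolding absolutely_continuous_def
  proof
    fix E assume "E \<in> null_sets \<mu>"
    then have E[measurable]: "E \<in> sets MZ" and E0: "emeasure \<mu> E = 0" by auto
    have "emeasure (\<nu> T) E = (\<integral>\<^sup>+\<omega>. indicator T \<omega> * indicator E (Z \<omega>) \<partial>M)"
      using int\<nu>[of T "indicator E"] by (simp add: \<nu>_def)
    also have "\<dots> \<le> (\<integral>\<^sup>+\<omega>. indicator E (Z \<omega>) \<partial>M)"
      by (intro nn_integral_mono) (auto split: split_indicator)
    also have "\<dots> = emeasure \<mu> E" unfolding \<mu>_def using nn_integral_distr[of Z M MZ "indicator E"] by simp
    finally show "E \<in> null_sets (\<nu> T)" using E0 by (auto simp: \<nu>_def null_sets_def)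
  qed
  have sets\<nu>: "sets (\<nu> T) = sets \<mu>" for T by (simp add: \<nu>_def)
  define r1 where "r1 = RN_deriv \<mu> (\<nu> S)"
  define r0 where "r0 = RN_deriv \<mu> (\<nu> (space M - S))"
  have d1: "density \<mu> r1 = \<nu> S" unfolding r1_def by (rule mu.density_RN_deriv[OF ac sets\<nu>]) simp
  have d0: "density \<mu> r0 = \<nu> (space M - S)" unfolding r0_def by (rule mu.density_RN_deriv[OF ac sets\<nu>]) simp
  have r1m[measurable]: "r1 \<in> borel_measurable MZ" unfolding r1_def
    using borel_measurable_RN_deriv[of \<mu>] by (simp add: bm)
  have r0m[measurable]: "r0 \<in> borel_measurable MZ" unfolding r0_def
    using borel_measurable_RN_deriv[of \<mu>] by (simp add: bm)
  have i1: "(\<integral>\<^sup>+z. r1 z * \<phi> z \<partial>\<mu>) = (\<integral>\<^sup>+\<omega>. indicator S \<omega> * \<phi> (Z \<omega>) \<partial>M)"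
    if [measurable]: "\<phi> \<in> borel_measurable MZ" for \<phi>
  proof -
    have "(\<integral>\<^sup>+z. r1 z * \<phi> z \<partial>\<mu>) = (\<integral>\<^sup>+z. \<phi> z \<partial>density \<mu> r1)"
      by (subst nn_integral_density) (auto simp: bm)
    then show ?thesis using int\<nu>[of S \<phi>] d1 by simp
  qed
  have i0: "(\<integral>\<^sup>+z. r0 z * \<phi> z \<partial>\<mu>) = (\<integral>\<^sup>+\<omega>. indicator (space M - S) \<omega> * \<phi> (Z \<omega>) \<partial>M)"
    if [measurable]: "\<phi> \<in> borel_measurable MZ" for \<phi>
  proof -
    have "(\<integral>\<^sup>+z. r0 z * \<phi> z \<partial>\<mu>) = (\<integral>\<^sup>+z. \<phi> z \<partial>density \<mu> r0)"
      by (subst nn_integral_density) (auto simp: bm)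
    then show ?thesis using int\<nu>[of "space M - S" \<phi>] d0 by simp
  qed
  have "density \<mu> (\<lambda>z. r1 z + r0 z) = density \<mu> (\<lambda>_. 1)"
  proof (rule measure_eqI)
    fix E assume "E \<in> sets (density \<mu> (\<lambda>z. r1 z + r0 z))"
    then have E[measurable]: "E \<in> sets MZ" by simp
    have "(\<integral>\<^sup>+z. (r1 z + r0 z) * indicator E z \<partial>\<mu>) = 
        (\<integral>\<^sup>+z. r1 z * indicator E z + r0 z * indicator E z \<partial>\<mu>)"
      by (simp add: distrib_right)
    also have "\<dots> = (\<integral>\<^sup>+z. r1 z * indicator E z \<partial>\<mu>) + (\<integral>\<^sup>+z. r0 z * indicator E z \<partial>\<mu>)"
      apply (intro nn_integral_add) unfolding bm by measurable
    also have "\<dots> = (\<integral>\<^sup>+\<omega>. indicator S \<omega> * indicator E (Z \<omega>) \<partial>M) +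
        (\<integral>\<^sup>+\<omega>. indicator (space M - S) \<omega> * indicator E (Z \<omega>) \<partial>M)"
      by (simp add: i1 i0)
    also have "\<dots> = (\<integral>\<^sup>+\<omega>. indicator E (Z \<omega>) \<partial>M)"
      apply (subst nn_integral_add[symmetric])
        apply measurable
      apply (intro nn_integral_cong)
      apply (auto split: split_indicator)
      done
    also have "\<dots> = (\<integral>\<^sup>+z. 1 * indicator E z \<partial>\<mu>)"
      unfolding \<mu>_def using nn_integral_distr[of Z M MZ "indicator E"] by simp
    finally show "emeasure (density \<mu> (\<lambda>z. r1 z + r0 z)) E = emeasure (density \<mu> (\<lambda>_. 1)) E"
      by (simp add: emeasure_density bm)
  qed simp
  then have ae: "AE z in \<mu>. r1 z + r0 z = 1"
    by (subst (asm) mu.density_unique_iff) (auto simp: bm)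
  define r where "r z = min 1 (enn2real (r1 z))" for z
  have r1r: "AE z in \<mu>. r1 z = ennreal (r z)" using ae
  proof eventually_elim
    case (elim z)
    then have "r1 z \<le> 1" by (metis le_iff_add)
    then show ?case unfolding r_def by (cases "r1 z") (auto simp: min_def top_unique)
  qed
  have r0r: "AE z in \<mu>. r0 z = ennreal (1 - r z)" using ae r1r
  proof eventually_elim
    case (elim z)
    have rn: "0 \<le> r z" unfolding r_def by simp
    have "r0 z = (r1 z + r0 z) - r1 z" using elim(2) by (simp add: ennreal_add_diff_cancel_left)
    also have "\<dots> = ennreal 1 - ennreal (r z)" using elim by simp
    also have "\<dots> = ennreal (1 - r z)" using ennreal_minus[of "r z" 1] rn by simp
    finally show ?case .
  qed
  show ?thesis
  proof
    show "r \<in> borel_measurable MZ" unfolding r_def by measurable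
    show "0 \<le> r z \<and> r z \<le> 1" for z unfolding r_def by auto
    fix \<phi> :: "_ \<Rightarrow> ennreal" assume [measurable]: "\<phi> \<in> borel_measurable MZ"
    show "(\<integral>\<^sup>+\<omega>. indicator S \<omega> * \<phi> (Z \<omega>) \<partial>M) = (\<integral>\<^sup>+z. ennreal (r z) * \<phi> z \<partial>distr M MZ Z)"
      unfolding i1[symmetric, OF \<open>\<phi> \<in> _\<close>] \<mu>_def[symmetric]
      by (intro nn_integral_cong_AE) (use r1r in auto)
  next
    fix \<phi> :: "_ \<Rightarrow> ennreal" assume [measurable]: "\<phi> \<in> borel_measurable MZ"
    show "(\<integral>\<^sup>+\<omega>. indicator (space M - S) \<omega> * \<phi> (Z \<omega>) \<partial>M) = (\<integral>\<^sup>+z. ennreal (1 - r z) * \<phi> z \<partial>distr M MZ Z)"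
      unfolding i0[symmetric, OF \<open>\<phi> \<in> _\<close>] \<mu>_def[symmetric]
      by (intro nn_integral_cong_AE) (use r0r in auto)
  qed
qed

lemma xlog_bound:
  fixes x b :: real assumes x0: "0 \<le> x" and b: "1 < b"
  shows "\<bar>x * log b x\<bar> \<le> (1 + x^2) / ln b"
proof (cases "x = 0")
  case True then show ?thesis using b by simp
next
  case False then have x: "0 < x" using x0 by simp
  have lb: "0 < ln b" using b by simp
  have l1: "ln x \<le> x - 1" using ln_le_minus_one x by simp
  have "ln (1/x) \<le> 1/x - 1" using ln_le_minus_one x by simp
  then have l2: "- ln x \<le> 1/x - 1" using x by (simp add: ln_div)
  have a0: "x * ln x \<le> x * (x - 1)" by (rule mult_left_mono[OF l1 x0])
  have "x * (x - 1) \<le> x^2" using x by (simp add: power2_eq_square algebra_simps)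
  with a0 have a1: "x * ln x \<le> x^2" by linarith
  have a2: "- (x * ln x) \<le> 1" using mult_left_mono[OF l2 x0] x by (simp add: algebra_simps)
  have "\<bar>x * ln x\<bar> \<le> 1 + x^2" using a1 a2 by (simp add: abs_le_iff) (smt (verit) zero_le_power2)
  then have "\<bar>x * ln x\<bar> / ln b \<le> (1 + x^2) / ln b" using lb by (simp add: divide_right_mono)
  moreover have "\<bar>x * log b x\<bar> = \<bar>x * ln x\<bar> / ln b" using lb by (simp add: log_def abs_div abs_mult)
  ultimately show ?thesis by simp
qed

lemma nn_int_bool_distr:
  assumes "prob_space M" and A[measurable]: "A \<in> M \<rightarrow>\<^sub>M count_space UNIV"
  shows "(\<integral>\<^sup>+a. f a \<partial>distr M (count_space UNIV) A) =
     ennreal (measure M {\<omega>\<in>space M. A \<omega>}) * f True + ennreal (measure M {\<omega>\<in>space M. \<not> A \<omega>}) * f False"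
proof -
  interpret prob_space M by fact
  have [measurable]: "{\<omega>\<in>space M. A \<omega>} \<in> sets M" "{\<omega>\<in>space M. \<not> A \<omega>} \<in> sets M" by measurable
  have "(\<integral>\<^sup>+a. f a \<partial>distr M (count_space UNIV) A) = (\<integral>\<^sup>+\<omega>. f (A \<omega>) \<partial>M)"
    by (rule nn_integral_distr) auto
  also have "\<dots> = (\<integral>\<^sup>+\<omega>. f True * indicator {\<omega>\<in>space M. A \<omega>} \<omega> + f False * indicator {\<omega>\<in>space M. \<not> A \<omega>} \<omega> \<partial>M)"
    by (intro nn_integral_cong) (auto split: split_indicator)
  also have "\<dots> = f True * emeasure M {\<omega>\<in>space M. A \<omega>} + f False * emeasure M {\<omega>\<in>space M. \<not> A \<omega>}"
    by (simp add: nn_integral_add nn_integral_cmult_indicator)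
  finally show ?thesis by (simp add: emeasure_eq_measure mult.commute)
qed

lemma nn_int_pair_bool2:
  assumes P: "prob_space M" and A[measurable]: "A \<in> M \<rightarrow>\<^sub>M count_space UNIV"
    and g: "g \<in> borel_measurable (N \<Otimes>\<^sub>M count_space UNIV)"
  shows "(\<integral>\<^sup>+x. g x \<partial>(N \<Otimes>\<^sub>M distr M (count_space UNIV) A)) =
     (\<integral>\<^sup>+z. ennreal (measure M {\<omega>\<in>space M. A \<omega>}) * g (z, True) + ennreal (measure M {\<omega>\<in>space M. \<not> A \<omega>}) * g (z, False) \<partial>N)"
proof -
  interpret PA: prob_space "distr M (count_space UNIV) A" by (rule prob_space.prob_space_distr[OF P A])
  have se: "sets (N \<Otimes>\<^sub>M distr M (count_space UNIV) A) = sets (N \<Otimes>\<^sub>M count_space UNIV)"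
    by (rule sets_pair_measure_cong) simp_all
  have g': "g \<in> borel_measurable (N \<Otimes>\<^sub>M distr M (count_space UNIV) A)"
    using g measurable_cong_sets[OF se refl] by simp
  have "(\<integral>\<^sup>+x. g x \<partial>(N \<Otimes>\<^sub>M distr M (count_space UNIV) A)) = (\<integral>\<^sup>+z. \<integral>\<^sup>+a. g (z, a) \<partial>distr M (count_space UNIV) A \<partial>N)"
    using PA.nn_integral_fst[OF g'] by simp
  also have "\<dots> = (\<integral>\<^sup>+z. ennreal (measure M {\<omega>\<in>space M. A \<omega>}) * g (z, True) + ennreal (measure M {\<omega>\<in>space M. \<not> A \<omega>}) * g (z, False) \<partial>N)"
    by (simp add: nn_int_bool_distr[OF P A])
  finally show ?thesis .
qed

lemma nn_int_pair_bool1: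
  assumes P: "prob_space M" and A[measurable]: "A \<in> M \<rightarrow>\<^sub>M count_space UNIV"
    and N: "sigma_finite_measure N"
    and g: "g \<in> borel_measurable (count_space UNIV \<Otimes>\<^sub>M N)"
  shows "(\<integral>\<^sup>+x. g x \<partial>(distr M (count_space UNIV) A \<Otimes>\<^sub>M N)) =
     (\<integral>\<^sup>+z. ennreal (measure M {\<omega>\<in>space M. A \<omega>}) * g (True, z) + ennreal (measure M {\<omega>\<in>space M. \<not> A \<omega>}) * g (False, z) \<partial>N)"
proof -
  interpret PA: prob_space "distr M (count_space UNIV) A" by (rule prob_space.prob_space_distr[OF P A])
  interpret N: sigma_finite_measure N by fact
  interpret pp: pair_sigma_finite "distr M (count_space UNIV) A" N ..
  have se: "sets (distr M (count_space UNIV) A \<Otimes>\<^sub>M N) = sets (count_space UNIV \<Otimes>\<^sub>M N)"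
    by (rule sets_pair_measure_cong) simp_all
  have g': "g \<in> borel_measurable (distr M (count_space UNIV) A \<Otimes>\<^sub>M N)"
    using g measurable_cong_sets[OF se refl] by simp
  have "(\<integral>\<^sup>+x. g x \<partial>(distr M (count_space UNIV) A \<Otimes>\<^sub>M N)) = (\<integral>\<^sup>+z. \<integral>\<^sup>+a. g (a, z) \<partial>distr M (count_space UNIV) A \<partial>N)"
    using pp.nn_integral_snd[OF g'] by simp
  also have "\<dots> = (\<integral>\<^sup>+z. ennreal (measure M {\<omega>\<in>space M. A \<omega>}) * g (True, z) + ennreal (measure M {\<omega>\<in>space M. \<not> A \<omega>}) * g (False, z) \<partial>N)"
    by (simp add: nn_int_bool_distr[OF P A])
  finally show ?thesis .
qed

lemma mi0_indep:
  assumes info: "information_space M b" and Z[measurable]: "Z \<in> M \<rightarrow>\<^sub>M MZ"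
    and A[measurable]: "A \<in> M \<rightarrow>\<^sub>M count_space UNIV"
    and p0: "0 < measure M {\<omega>\<in>space M. A \<omega>}" and p1: "measure M {\<omega>\<in>space M. A \<omega>} < 1"
    and mi: "prob_space.mutual_information M b MZ (count_space UNIV) Z A = 0"
    and phi[measurable]: "\<phi> \<in> borel_measurable MZ"
  shows "(\<integral>\<^sup>+\<omega>. indicator {\<omega>\<in>space M. A \<omega> = c} \<omega> * \<phi> (Z \<omega>) \<partial>M)
           = ennreal (measure M {\<omega>\<in>space M. A \<omega> = c}) * (\<integral>\<^sup>+\<omega>. \<phi> (Z \<omega>) \<partial>M)"
proof -
  interpret information_space M b by fact
  define S where "S = {\<omega>\<in>space M. A \<omega>}"
  define p where "p = prob S"
  have S[measurable]: "S \<in> sets M" unfolding S_def by measurable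
  have S0: "space M - S = {\<omega>\<in>space M. \<not> A \<omega>}" unfolding S_def by auto
  have pS0: "prob {\<omega>\<in>space M. \<not> A \<omega>} = 1 - p" unfolding p_def S0[symmetric] by (rule prob_compl[OF S])
  have pp0: "0 < p" "p < 1" using p0 p1 unfolding p_def S_def by auto
  obtain r where r[measurable]: "r \<in> borel_measurable MZ" and r01: "\<And>z. 0 \<le> r z \<and> r z \<le> 1"
    and r1: "\<And>\<phi>. \<phi> \<in> borel_measurable MZ \<Longrightarrow>
       (\<integral>\<^sup>+\<omega>. indicator S \<omega> * \<phi> (Z \<omega>) \<partial>M) = (\<integral>\<^sup>+z. ennreal (r z) * \<phi> z \<partial>distr M MZ Z)"
    and r0: "\<And>\<phi>. \<phi> \<in> borel_measurable MZ \<Longrightarrow>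
       (\<integral>\<^sup>+\<omega>. indicator (space M - S) \<omega> * \<phi> (Z \<omega>) \<partial>M) = (\<integral>\<^sup>+z. ennreal (1 - r z) * \<phi> z \<partial>distr M MZ Z)"
    using cp_density[OF prob_space_axioms Z S] by blast
  define \<mu> where "\<mu> = distr M MZ Z"
  define PA where "PA = distr M (count_space UNIV) A"
  define P where "P = \<mu> \<Otimes>\<^sub>M PA"
  define Q where "Q = distr M (MZ \<Otimes>\<^sub>M count_space UNIV) (\<lambda>x. (Z x, A x))"
  define D where "D x = (if snd x then r (fst x) / p else (1 - r (fst x)) / (1 - p))" for x
  interpret mu: prob_space \<mu> unfolding \<mu>_def by (rule prob_space_distr) simp
  interpret PA: prob_space PA unfolding PA_def by (rule prob_space_distr) simp
  interpret pp: pair_prob_space \<mu> PA by standard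
  interpret IP: information_space P b unfolding P_def by standard (rule b_gt_1)
  have setsP: "sets P = sets (MZ \<Otimes>\<^sub>M count_space UNIV)" unfolding P_def \<mu>_def PA_def
    by (rule sets_pair_measure_cong) simp_all
  have bmP: "borel_measurable P = borel_measurable (MZ \<Otimes>\<^sub>M count_space UNIV)"
    by (rule measurable_cong_sets[OF setsP refl])
  have Dm: "D \<in> borel_measurable (MZ \<Otimes>\<^sub>M count_space UNIV)" unfolding D_def by measurable
  have D0: "0 \<le> D x" for x using r01[of "fst x"] pp0 unfolding D_def by auto
  have intP: "(\<integral>\<^sup>+x. g x \<partial>P) = (\<integral>\<^sup>+z. ennreal p * g (z, True) + ennreal (1 - p) * g (z, False) \<partial>\<mu>)"
    if g: "g \<in> borel_measurable (MZ \<Otimes>\<^sub>M count_space UNIV)" for g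
  proof -
    have g': "g \<in> borel_measurable (\<mu> \<Otimes>\<^sub>M count_space UNIV)"
      using g measurable_cong_sets[OF sets_pair_measure_cong[of \<mu> MZ "count_space UNIV" "count_space UNIV"] refl]
      by (simp add: \<mu>_def)
    show ?thesis unfolding P_def PA_def
      using nn_int_pair_bool2[OF prob_space_axioms A g'] pS0 unfolding p_def S_def by simp
  qed
  have intQ: "(\<integral>\<^sup>+x. g x \<partial>Q) = (\<integral>\<^sup>+z. ennreal (r z) * g (z, True) + ennreal (1 - r z) * g (z, False) \<partial>\<mu>)"
    if g[measurable]: "g \<in> borel_measurable (MZ \<Otimes>\<^sub>M count_space UNIV)" for g
  proof -
    have "(\<integral>\<^sup>+x. g x \<partial>Q) = (\<integral>\<^sup>+\<omega>. g (Z \<omega>, A \<omega>) \<partial>M)"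
      unfolding Q_def by (rule nn_integral_distr) simp_all
    also have "\<dots> = (\<integral>\<^sup>+\<omega>. indicator S \<omega> * g (Z \<omega>, True) + indicator (space M - S) \<omega> * g (Z \<omega>, False) \<partial>M)"
      by (intro nn_integral_cong) (auto simp: S_def split: split_indicator)
    also have "\<dots> = (\<integral>\<^sup>+\<omega>. indicator S \<omega> * g (Z \<omega>, True) \<partial>M) + (\<integral>\<^sup>+\<omega>. indicator (space M - S) \<omega> * g (Z \<omega>, False) \<partial>M)"
      by (rule nn_integral_add) measurable
    also have "\<dots> = (\<integral>\<^sup>+z. ennreal (r z) * g (z, True) \<partial>\<mu>) + (\<integral>\<^sup>+z. ennreal (1 - r z) * g (z, False) \<partial>\<mu>)"
    proof -
      have m1: "(\<lambda>z. g (z, True)) \<in> borel_measurable MZ" and m0: "(\<lambda>z. g (z, False)) \<in> borel_measurable MZ"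
        by measurable
      show ?thesis unfolding \<mu>_def using r1[OF m1] r0[OF m0] by simp
    qed
    also have "\<dots> = (\<integral>\<^sup>+z. ennreal (r z) * g (z, True) + ennreal (1 - r z) * g (z, False) \<partial>\<mu>)"
      unfolding \<mu>_def by (rule nn_integral_add[symmetric]) simp_all
    finally show ?thesis .
  qed
  have QD: "Q = density P D"
  proof (rule measure_eqI)
    show "sets Q = sets (density P D)" using setsP by (simp add: Q_def)
    fix E assume "E \<in> sets Q"
    then have E[measurable]: "E \<in> sets (MZ \<Otimes>\<^sub>M count_space UNIV)" by (simp add: Q_def)
    have "emeasure Q E = (\<integral>\<^sup>+x. indicator E x \<partial>Q)" by (simp add: Q_def)
    also have "\<dots> = (\<integral>\<^sup>+z. ennreal (r z) * indicator E (z, True) + ennreal (1 - r z) * indicator E (z, False) \<partial>\<mu>)"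
      by (rule intQ) measurable
    also have "\<dots> = (\<integral>\<^sup>+z. ennreal p * (ennreal (D (z, True)) * indicator E (z, True)) + ennreal (1 - p) * (ennreal (D (z, False)) * indicator E (z, False)) \<partial>\<mu>)"
    proof (intro nn_integral_cong)
      fix z
      have e1: "ennreal p * ennreal (D (z, True)) = ennreal (r z)"
        using pp0 r01[of z] by (simp add: D_def ennreal_mult[symmetric])
      have e2: "ennreal (1 - p) * ennreal (D (z, False)) = ennreal (1 - r z)"
        using pp0 r01[of z] by (simp add: D_def ennreal_mult[symmetric])
      show "ennreal (r z) * indicator E (z, True) + ennreal (1 - r z) * indicator E (z, False) =
         ennreal p * (ennreal (D (z, True)) * indicator E (z, True)) + ennreal (1 - p) * (ennreal (D (z, False)) * indicator E (z, False))"
        by (simp add: mult.assoc[symmetric] e1 e2)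
    qed
    also have "\<dots> = (\<integral>\<^sup>+x. ennreal (D x) * indicator E x \<partial>P)"
      by (rule intP[symmetric]) (use Dm in measurable)
    also have "\<dots> = emeasure (density P D) E"
      using Dm E by (subst emeasure_density) (simp_all add: bmP setsP)
    finally show "emeasure Q E = emeasure (density P D) E" .
  qed
  define K where "K = 1 / p + 1 / (1 - p)"
  have DK: "D x \<le> K" for x
  proof -
    have h: "r (fst x) / p \<le> 1 / p" "(1 - r (fst x)) / (1 - p) \<le> 1 / (1 - p)"
      using r01[of "fst x"] pp0 by (simp_all add: divide_right_mono)
    have h3: "0 \<le> 1 / p" and h4: "0 \<le> 1 / (1 - p)" using pp0 by simp_all
    have "D x \<le> 1 / p \<or> D x \<le> 1 / (1 - p)" unfolding D_def using h by auto
    then show ?thesis unfolding K_def using h3 h4 by linarith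
  qed
  have int: "integrable P (\<lambda>x. D x * log b (D x))"
  proof (rule IP.integrable_const_bound[where B="(1 + K^2) / ln b"])
    show "AE x in P. norm (D x * log b (D x)) \<le> (1 + K^2) / ln b"
    proof (intro AE_I2)
      fix x
      have "\<bar>D x * log b (D x)\<bar> \<le> (1 + (D x)^2) / ln b" by (rule xlog_bound[OF D0 b_gt_1])
      also have "\<dots> \<le> (1 + K^2) / ln b"
        using D0[of x] DK[of x] b_gt_1 by (intro divide_right_mono add_left_mono power_mono) auto
      finally show "norm (D x * log b (D x)) \<le> (1 + K^2) / ln b" by simp
    qed
    show "(\<lambda>x. D x * log b (D x)) \<in> borel_measurable P" using Dm by (simp add: bmP)
  qed
  have "KL_divergence b P Q = 0"
    using mi unfolding mutual_information_def P_def \<mu>_def PA_def Q_def .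
  then have "KL_divergence b P (density P D) = 0" by (simp add: QD)
  moreover have "prob_space (density P D)" unfolding QD[symmetric] Q_def by (rule prob_space_distr) simp
  moreover have "D \<in> borel_measurable P" using Dm by (simp add: bmP)
  ultimately have "density P D = P"
    using IP.KL_eq_0_iff_eq[of D] int D0 by simp
  then have QP: "Q = P" using QD by simp
  define g where "g x = (if snd x = c then \<phi> (fst x) else 0)" for x
  have g[measurable]: "g \<in> borel_measurable (MZ \<Otimes>\<^sub>M count_space UNIV)" unfolding g_def by measurable
  have "(\<integral>\<^sup>+\<omega>. indicator {\<omega>\<in>space M. A \<omega> = c} \<omega> * \<phi> (Z \<omega>) \<partial>M) = (\<integral>\<^sup>+\<omega>. g (Z \<omega>, A \<omega>) \<partial>M)"
    by (intro nn_integral_cong) (auto simp: g_def split: split_indicator)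
  also have "\<dots> = (\<integral>\<^sup>+x. g x \<partial>Q)"
    unfolding Q_def by (rule nn_integral_distr[symmetric]) simp_all
  also have "\<dots> = (\<integral>\<^sup>+x. g x \<partial>P)" by (simp add: QP)
  also have "\<dots> = (\<integral>\<^sup>+z. ennreal p * g (z, True) + ennreal (1 - p) * g (z, False) \<partial>\<mu>)"
    by (rule intP[OF g])
  also have "\<dots> = (\<integral>\<^sup>+z. ennreal (prob {\<omega>\<in>space M. A \<omega> = c}) * \<phi> z \<partial>\<mu>)"
  proof (intro nn_integral_cong)
    fix z
    have "{\<omega>\<in>space M. A \<omega> = True} = S" "{\<omega>\<in>space M. A \<omega> = False} = {\<omega>\<in>space M. \<not> A \<omega>}"
      unfolding S_def by auto
    then show "ennreal p * g (z, True) + ennreal (1 - p) * g (z, False) = ennreal (prob {\<omega>\<in>space M. A \<omega> = c}) * \<phi> z"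
      using pS0 by (cases c) (simp_all add: g_def p_def)
  qed
  also have "\<dots> = ennreal (prob {\<omega>\<in>space M. A \<omega> = c}) * (\<integral>\<^sup>+\<omega>. \<phi> (Z \<omega>) \<partial>M)"
    unfolding \<mu>_def by (subst nn_integral_cmult) (simp_all add: nn_integral_distr)
  finally show ?thesis .
qed

lemma distributed_count_UNIV:
  fixes X :: "'a \<Rightarrow> 'b::finite"
  assumes P: "prob_space M" and X[measurable]: "X \<in> M \<rightarrow>\<^sub>M count_space UNIV"
  shows "distributed M (count_space UNIV) X (\<lambda>x. ennreal (measure M {\<omega>\<in>space M. X \<omega> = x}))"
  unfolding distributed_def
proof (intro conjI)
  interpret prob_space M by fact
  show "distr M (count_space UNIV) X = density (count_space UNIV) (\<lambda>x. ennreal (measure M {\<omega>\<in>space M. X \<omega> = x}))"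
  proof (rule measure_eqI_finite[where A=UNIV])
    fix a :: 'b
    have "emeasure (distr M (count_space UNIV) X) {a} = emeasure M {\<omega>\<in>space M. X \<omega> = a}"
      by (subst emeasure_distr) (auto intro!: arg_cong[where f="emeasure M"])
    also have "\<dots> = ennreal (measure M {\<omega>\<in>space M. X \<omega> = a})" by (simp add: emeasure_eq_measure)
    also have "\<dots> = emeasure (density (count_space UNIV) (\<lambda>x. ennreal (measure M {\<omega>\<in>space M. X \<omega> = x}))) {a}"
      by (simp add: emeasure_density nn_integral_count_space_finite)
    finally show "emeasure (distr M (count_space UNIV) X) {a} = emeasure (density (count_space UNIV) (\<lambda>x. ennreal (measure M {\<omega>\<in>space M. X \<omega> = x}))) {a}" .
  qed simp_all
qed simp_all

lemma entropy_bool: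
  fixes A :: "'w \<Rightarrow> bool"
  assumes info: "information_space M b" and A[measurable]: "A \<in> M \<rightarrow>\<^sub>M count_space UNIV"
  shows "prob_space.entropy M b (count_space UNIV) A =
     - (measure M {\<omega>\<in>space M. A \<omega>} * log b (measure M {\<omega>\<in>space M. A \<omega>}) +
        measure M {\<omega>\<in>space M. \<not> A \<omega>} * log b (measure M {\<omega>\<in>space M. \<not> A \<omega>}))"
proof -
  interpret information_space M b by fact
  have "entropy b (count_space UNIV) A = - (\<integral>x. measure M {\<omega>\<in>space M. A \<omega> = x} * log b (measure M {\<omega>\<in>space M. A \<omega> = x}) \<partial>count_space UNIV)"
    by (rule entropy_distr[OF distributed_count_UNIV[OF prob_space_axioms A]]) simp
  also have "\<dots> = - (measure M {\<omega>\<in>space M. A \<omega>} * log b (measure M {\<omega>\<in>space M. A \<omega>}) +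
        measure M {\<omega>\<in>space M. \<not> A \<omega>} * log b (measure M {\<omega>\<in>space M. \<not> A \<omega>}))"
    by (simp add: lebesgue_integral_count_space_finite UNIV_bool)
  finally show ?thesis .
qed

lemma cond_entropy_bool:
  fixes A Y :: "'w \<Rightarrow> bool"
  assumes info: "information_space M b" and A[measurable]: "A \<in> M \<rightarrow>\<^sub>M count_space UNIV"
    and Y[measurable]: "Y \<in> M \<rightarrow>\<^sub>M count_space UNIV"
  shows "prob_space.conditional_entropy M b (count_space UNIV) (count_space UNIV) A Y =
     - (\<Sum>x\<in>UNIV. measure M {\<omega>\<in>space M. (A \<omega>, Y \<omega>) = x} *
          log b (measure M {\<omega>\<in>space M. (A \<omega>, Y \<omega>) = x} / measure M {\<omega>\<in>space M. Y \<omega> = snd x}))"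
proof -
  interpret information_space M b by fact
  have cc: "count_space UNIV \<Otimes>\<^sub>M count_space UNIV = (count_space UNIV :: (bool \<times> bool) measure)"
    using pair_measure_count_space[of "UNIV :: bool set" "UNIV :: bool set"] by simp
  have AY: "(\<lambda>\<omega>. (A \<omega>, Y \<omega>)) \<in> M \<rightarrow>\<^sub>M count_space UNIV" by (simp add: cc[symmetric])
  have "conditional_entropy b (count_space UNIV) (count_space UNIV) A Y =
     - (\<integral>(x, y). measure M {\<omega>\<in>space M. (A \<omega>, Y \<omega>) = (x, y)} *
          log b (measure M {\<omega>\<in>space M. (A \<omega>, Y \<omega>) = (x, y)} / measure M {\<omega>\<in>space M. Y \<omega> = y}) \<partial>(count_space UNIV \<Otimes>\<^sub>M count_space UNIV))"
    apply (rule conditional_entropy_generic_eq)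
    apply (simp_all add: sigma_finite_measure_count_space_finite)
    apply (rule distributed_count_UNIV[OF prob_space_axioms Y])
    apply (subst cc)
    apply (rule distributed_count_UNIV[OF prob_space_axioms AY])
    done
  also have "\<dots> = - (\<Sum>x\<in>UNIV. measure M {\<omega>\<in>space M. (A \<omega>, Y \<omega>) = x} *
          log b (measure M {\<omega>\<in>space M. (A \<omega>, Y \<omega>) = x} / measure M {\<omega>\<in>space M. Y \<omega> = snd x}))"
    by (simp only: cc lebesgue_integral_count_space_finite[OF finite_class.finite_UNIV] split_beta' prod.collapse)
  finally show ?thesis .
qed

lemma gibbs_real:
  fixes p t b :: real
  assumes p: "0 < p" "p < 1" and t: "0 < t" "t < 1" and b: "1 < b"
  shows "- (p * log b p + (1 - p) * log b (1 - p)) \<le> p * (- log b t) + (1 - p) * (- log b (1 - t))"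
proof -
  have lb: "0 < ln b" using b by simp
  have h1: "ln (t / p) \<le> t / p - 1" using p t by (intro ln_le_minus_one) simp
  have h2: "ln ((1 - t) / (1 - p)) \<le> (1 - t) / (1 - p) - 1" using p t by (intro ln_le_minus_one) simp
  have e1: "ln (t / p) = ln t - ln p" using p t by (simp add: ln_div)
  have e2: "ln ((1 - t) / (1 - p)) = ln (1 - t) - ln (1 - p)" using p t by (simp add: ln_div)
  have f1: "p * (t / p - 1) = t - p" using p by (simp add: field_simps)
  have f2: "(1 - p) * ((1 - t) / (1 - p) - 1) = p - t" using p by (simp add: field_simps)
  have k1: "p * (ln t - ln p) \<le> t - p"
    using mult_left_mono[OF h1, of p] p unfolding e1 f1 by simp
  have k2: "(1 - p) * (ln (1 - t) - ln (1 - p)) \<le> p - t"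
    using mult_left_mono[OF h2, of "1 - p"] p unfolding e2 f2 by simp
  have "- (p * ln p + (1 - p) * ln (1 - p)) \<le> p * (- ln t) + (1 - p) * (- ln (1 - t))"
    using k1 k2 by (simp add: algebra_simps)
  then have "(- (p * ln p + (1 - p) * ln (1 - p))) / ln b \<le> (p * (- ln t) + (1 - p) * (- ln (1 - t))) / ln b"
    using lb by (simp add: divide_right_mono)
  then show ?thesis by (simp add: log_def add_divide_distrib diff_divide_distrib)
qed

lemma gibbs_ce:
  fixes p b :: real
  assumes p: "0 < p" "p < 1" and b: "1 < b"
  shows "ennreal (- (p * log b p + (1 - p) * log b (1 - p))) \<le> ennreal p * ce_loss b True t + ennreal (1 - p) * ce_loss b False t"
proof (cases "t \<le> 0 \<or> 1 \<le> t")
  case True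
  then show ?thesis using p by (auto simp: ce_loss_def ennreal_mult_top)
next
  case False
  then have t: "0 < t" "t < 1" by auto
  have l1: "0 \<le> - log b t" using t b by simp
  have l2: "0 \<le> - log b (1 - t)" using t b by simp
  have c1: "ennreal p * ce_loss b True t = ennreal (p * (- log b t))"
  proof -
    have "ce_loss b True t = ennreal (- log b t)" using t by (simp add: ce_loss_def)
    then show ?thesis using ennreal_mult[of p "- log b t"] p l1 by simp
  qed
  have c2: "ennreal (1 - p) * ce_loss b False t = ennreal ((1 - p) * (- log b (1 - t)))"
  proof -
    have "ce_loss b False t = ennreal (- log b (1 - t))" using t by (simp add: ce_loss_def)
    then show ?thesis using ennreal_mult[of "1 - p" "- log b (1 - t)"] p l2 by simp
  qed
  have n1: "0 \<le> p * (- log b t)" and n2: "0 \<le> (1 - p) * (- log b (1 - t))"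
    using p l1 l2 by (simp_all add: mult_nonneg_nonpos)
  have "ennreal p * ce_loss b True t + ennreal (1 - p) * ce_loss b False t =
      ennreal (p * (- log b t) + (1 - p) * (- log b (1 - t)))"
    unfolding c1 c2 using ennreal_plus[OF n1 n2] by simp
  then show ?thesis using gibbs_real[OF p t b] by (simp add: ennreal_leI)
qed

lemma ennreal_sub_le:
  fixes x :: ennreal and \<alpha> \<beta> :: real
  assumes "ennreal \<beta> \<le> x + ennreal \<alpha>" "0 \<le> \<alpha>"
  shows "ennreal (\<beta> - \<alpha>) \<le> x"
proof (cases x)
  case (real x')
  have s: "ennreal (x' + \<alpha>) = x + ennreal \<alpha>" using real assms(2) by (simp add: ennreal_plus)
  have "ennreal \<beta> \<le> ennreal (x' + \<alpha>)" using assms(1) s by simp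
  then have "\<beta> \<le> x' + \<alpha>" using real assms(2) ennreal_le_iff[of "x' + \<alpha>" \<beta>] by simp
  then have "\<beta> - \<alpha> \<le> x'" by simp
  then show ?thesis using real by (simp add: ennreal_leI)
qed simp

lemma ce_measurable[measurable]: "(\<lambda>t. ce_loss b y t) \<in> borel_measurable borel"
  unfolding ce_loss_def by measurable

lemma part1_core:
  fixes A Y :: "'w \<Rightarrow> bool" and Z :: "'w \<Rightarrow> 'z"
  assumes P: "prob_space M" and b: "1 < b"
    and Z[measurable]: "Z \<in> M \<rightarrow>\<^sub>M MZ" and A[measurable]: "A \<in> M \<rightarrow>\<^sub>M count_space UNIV"
    and Y[measurable]: "Y \<in> M \<rightarrow>\<^sub>M count_space UNIV"
    and h: "h \<in> rand_predictors MZ"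
    and ind: "\<And>c \<phi>. \<phi> \<in> borel_measurable MZ \<Longrightarrow>
       (\<integral>\<^sup>+\<omega>. indicator {\<omega>\<in>space M. A \<omega> = c} \<omega> * \<phi> (Z \<omega>) \<partial>M)
           = ennreal (measure M {\<omega>\<in>space M. A \<omega> = c}) * (\<integral>\<^sup>+\<omega>. \<phi> (Z \<omega>) \<partial>M)"
    and p0: "0 < measure M {\<omega>\<in>space M. A \<omega>}" and p1: "measure M {\<omega>\<in>space M. A \<omega>} < 1"
  shows "ennreal ((- (measure M {\<omega>\<in>space M. A \<omega>} * log b (measure M {\<omega>\<in>space M. A \<omega>}) +
                 (1 - measure M {\<omega>\<in>space M. A \<omega>}) * log b (1 - measure M {\<omega>\<in>space M. A \<omega>}))) *
           (measure M {\<omega>\<in>space M. Y \<omega> \<and> A \<omega>} / measure M {\<omega>\<in>space M. A \<omega>}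
            - measure M {\<omega>\<in>space M. Y \<omega> \<and> \<not> A \<omega>} / (1 - measure M {\<omega>\<in>space M. A \<omega>})))
         \<le> exp_loss M b Y Z h"
proof -
  interpret prob_space M by fact
  define p where "p = measure M {\<omega>\<in>space M. A \<omega>}"
  define H where "H = - (p * log b p + (1 - p) * log b (1 - p))"
  define a where "a = measure M {\<omega>\<in>space M. Y \<omega> \<and> A \<omega>}"
  define c where "c = measure M {\<omega>\<in>space M. Y \<omega> \<and> \<not> A \<omega>}"
  have pp: "0 < p" "p < 1" using p0 p1 by (simp_all add: p_def)
  have H0: "0 \<le> H"
  proof -
    have "log b p \<le> 0" "log b (1 - p) \<le> 0" using pp b by simp_all
    then have "p * log b p \<le> 0" "(1 - p) * log b (1 - p) \<le> 0" using pp by (simp_all add: mult_nonneg_nonpos)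
    then show ?thesis unfolding H_def by simp
  qed
  have hm[measurable]: "h \<in> MZ \<rightarrow>\<^sub>M subprob_algebra borel" and hp: "\<And>z. z \<in> space MZ \<Longrightarrow> prob_space (h z)"
    using h unfolding rand_predictors_def by auto
  define u where "u z = (\<integral>\<^sup>+t. ce_loss b True t \<partial>h z)" for z
  define v where "v z = (\<integral>\<^sup>+t. ce_loss b False t \<partial>h z)" for z
  have um[measurable]: "u \<in> borel_measurable MZ" unfolding u_def
    by (rule nn_integral_measurable_subprob_algebra2[where f="\<lambda>z t. ce_loss b True t"]) measurable
  have vm[measurable]: "v \<in> borel_measurable MZ" unfolding v_def
    by (rule nn_integral_measurable_subprob_algebra2[where f="\<lambda>z t. ce_loss b False t"]) measurable
  have gib: "ennreal H \<le> ennreal p * u z + ennreal (1 - p) * v z" if z: "z \<in> space MZ" for z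
  proof -
    have sh: "sets (h z) = sets borel" using sets_kernel[OF hm z] .
    have bm: "borel_measurable (h z) = borel_measurable borel" by (rule measurable_cong_sets[OF sh refl])
    have "ennreal p * u z + ennreal (1 - p) * v z = (\<integral>\<^sup>+t. ennreal p * ce_loss b True t + ennreal (1 - p) * ce_loss b False t \<partial>h z)"
      unfolding u_def v_def by (simp add: nn_integral_add nn_integral_cmult bm)
    also have "\<dots> \<ge> (\<integral>\<^sup>+t. ennreal H \<partial>h z)"
      unfolding H_def by (intro nn_integral_mono gibbs_ce pp b)
    moreover have "(\<integral>\<^sup>+t. ennreal H \<partial>h z) = ennreal H"
      using prob_space.emeasure_space_1[OF hp[OF z]] by simp
    ultimately show ?thesis by simp
  qed
  have ep: "ennreal p * ennreal (H / p) = ennreal H" using pp H0 by (simp add: ennreal_mult[symmetric])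
  have eq: "ennreal (1 - p) * ennreal (H / (1 - p)) = ennreal H" using pp H0 by (simp add: ennreal_mult[symmetric])
  define m1 where "m1 z = min (u z) (v z + ennreal (H / p))" for z
  define m0 where "m0 z = min (u z + ennreal (H / (1 - p))) (v z)" for z
  have m1m[measurable]: "m1 \<in> borel_measurable MZ" unfolding m1_def by measurable
  have m0m[measurable]: "m0 \<in> borel_measurable MZ" unfolding m0_def by measurable
  have pm: "ennreal H \<le> ennreal p * m1 z + ennreal (1 - p) * m0 z" if z: "z \<in> space MZ" for z
  proof -
    consider "m1 z = u z" "m0 z = v z" | "m1 z = v z + ennreal (H / p)" | "m0 z = u z + ennreal (H / (1 - p))"
      unfolding m1_def m0_def by (metis min_def)
    then show ?thesis
    proof cases
      case 1 then show ?thesis using gib[OF z] by simp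
    next
      case 2
      have "ennreal H \<le> ennreal p * v z + ennreal H" by simp
      also have "\<dots> = ennreal p * m1 z" using 2 ep by (simp add: distrib_left)
      also have "\<dots> \<le> ennreal p * m1 z + ennreal (1 - p) * m0 z" by simp
      finally show ?thesis .
    next
      case 3
      have "ennreal H \<le> ennreal (1 - p) * u z + ennreal H" by simp
      also have "\<dots> = ennreal (1 - p) * m0 z" using 3 eq by (simp add: distrib_left)
      also have "\<dots> \<le> ennreal p * m1 z + ennreal (1 - p) * m0 z" by simp
      finally show ?thesis .
    qed
  qed
  define SA where "SA = {\<omega>\<in>space M. A \<omega>}"
  define SnA where "SnA = {\<omega>\<in>space M. \<not> A \<omega>}"
  define SAY where "SAY = {\<omega>\<in>space M. Y \<omega> \<and> A \<omega>}"
  define SnAY where "SnAY = {\<omega>\<in>space M. Y \<omega> \<and> \<not> A \<omega>}"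
  have [measurable]: "SA \<in> sets M" "SnA \<in> sets M" "SAY \<in> sets M" "SnAY \<in> sets M"
    unfolding SA_def SnA_def SAY_def SnAY_def by measurable
  define L where "L \<omega> = (if Y \<omega> then u (Z \<omega>) else v (Z \<omega>))" for \<omega>
  have Lm[measurable]: "L \<in> borel_measurable M" unfolding L_def by measurable
  have EL: "exp_loss M b Y Z h = (\<integral>\<^sup>+\<omega>. L \<omega> \<partial>M)"
    unfolding exp_loss_def L_def u_def v_def by (intro nn_integral_cong) simp
  have pw: "indicator SA \<omega> * m1 (Z \<omega>) + indicator SnA \<omega> * m0 (Z \<omega>) + ennreal (H / p) * indicator SAY \<omega>
      \<le> L \<omega> + ennreal (H / p) * indicator SA \<omega> + ennreal (H / (1 - p)) * indicator SnAY \<omega>"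
    if "\<omega> \<in> space M" for \<omega>
    using that unfolding SA_def SnA_def SAY_def SnAY_def L_def m1_def m0_def
    by (cases "A \<omega>"; cases "Y \<omega>") (auto simp: indicator_def add_mono min.coboundedI1 min.coboundedI2)
  have a0: "0 \<le> a" and c0: "0 \<le> c" unfolding a_def c_def by simp_all
  have mSA: "emeasure M SA = ennreal p" unfolding SA_def p_def by (simp add: emeasure_eq_measure)
  have mSnA: "measure M SnA = 1 - p"
  proof -
    have "SnA = space M - SA" unfolding SnA_def SA_def by auto
    then show ?thesis using prob_compl[of SA] unfolding p_def SA_def by simp
  qed
  have int_L: "(\<integral>\<^sup>+\<omega>. L \<omega> + ennreal (H / p) * indicator SA \<omega> + ennreal (H / (1 - p)) * indicator SnAY \<omega> \<partial>M)
      = exp_loss M b Y Z h + ennreal H + ennreal (H * c / (1 - p))"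
  proof -
    have "(\<integral>\<^sup>+\<omega>. L \<omega> + ennreal (H / p) * indicator SA \<omega> + ennreal (H / (1 - p)) * indicator SnAY \<omega> \<partial>M)
        = (\<integral>\<^sup>+\<omega>. L \<omega> \<partial>M) + ennreal (H / p) * emeasure M SA + ennreal (H / (1 - p)) * emeasure M SnAY"
      by (simp add: nn_integral_add nn_integral_cmult_indicator)
    also have "ennreal (H / p) * emeasure M SA = ennreal H" using ep by (simp add: mSA mult.commute)
    also have "ennreal (H / (1 - p)) * emeasure M SnAY = ennreal (H * c / (1 - p))"
      using pp H0 c0 unfolding SnAY_def c_def by (simp add: emeasure_eq_measure ennreal_mult[symmetric])
    finally show ?thesis using EL by simp
  qed
  have int_R: "(\<integral>\<^sup>+\<omega>. indicator SA \<omega> * m1 (Z \<omega>) + indicator SnA \<omega> * m0 (Z \<omega>) + ennreal (H / p) * indicator SAY \<omega> \<partial>M)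
      = ennreal p * (\<integral>\<^sup>+\<omega>. m1 (Z \<omega>) \<partial>M) + ennreal (1 - p) * (\<integral>\<^sup>+\<omega>. m0 (Z \<omega>) \<partial>M) + ennreal (H * a / p)"
  proof -
    have "(\<integral>\<^sup>+\<omega>. indicator SA \<omega> * m1 (Z \<omega>) + indicator SnA \<omega> * m0 (Z \<omega>) + ennreal (H / p) * indicator SAY \<omega> \<partial>M)
        = (\<integral>\<^sup>+\<omega>. indicator SA \<omega> * m1 (Z \<omega>) \<partial>M) + (\<integral>\<^sup>+\<omega>. indicator SnA \<omega> * m0 (Z \<omega>) \<partial>M) + ennreal (H / p) * emeasure M SAY"
      by (simp add: nn_integral_add nn_integral_cmult_indicator)
    also have "(\<integral>\<^sup>+\<omega>. indicator SA \<omega> * m1 (Z \<omega>) \<partial>M) = ennreal p * (\<integral>\<^sup>+\<omega>. m1 (Z \<omega>) \<partial>M)"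
      using ind[OF m1m, of True] unfolding SA_def p_def by simp
    also have "(\<integral>\<^sup>+\<omega>. indicator SnA \<omega> * m0 (Z \<omega>) \<partial>M) = ennreal (1 - p) * (\<integral>\<^sup>+\<omega>. m0 (Z \<omega>) \<partial>M)"
      using ind[OF m0m, of False] mSnA unfolding SnA_def by simp
    also have "ennreal (H / p) * emeasure M SAY = ennreal (H * a / p)"
      using pp H0 a0 unfolding SAY_def a_def by (simp add: emeasure_eq_measure ennreal_mult[symmetric])
    finally show ?thesis .
  qed
  have int_m: "ennreal H \<le> ennreal p * (\<integral>\<^sup>+\<omega>. m1 (Z \<omega>) \<partial>M) + ennreal (1 - p) * (\<integral>\<^sup>+\<omega>. m0 (Z \<omega>) \<partial>M)"
  proof -
    have "ennreal H = (\<integral>\<^sup>+\<omega>. ennreal H \<partial>M)" by (simp add: emeasure_space_1)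
    also have "\<dots> \<le> (\<integral>\<^sup>+\<omega>. ennreal p * m1 (Z \<omega>) + ennreal (1 - p) * m0 (Z \<omega>) \<partial>M)"
      by (intro nn_integral_mono pm measurable_space[OF Z])
    also have "\<dots> = ennreal p * (\<integral>\<^sup>+\<omega>. m1 (Z \<omega>) \<partial>M) + ennreal (1 - p) * (\<integral>\<^sup>+\<omega>. m0 (Z \<omega>) \<partial>M)"
      by (simp add: nn_integral_add nn_integral_cmult)
    finally show ?thesis .
  qed
  have "ennreal H + ennreal (H * a / p) \<le> exp_loss M b Y Z h + ennreal H + ennreal (H * c / (1 - p))"
  proof -
    have "ennreal H + ennreal (H * a / p) \<le> ennreal p * (\<integral>\<^sup>+\<omega>. m1 (Z \<omega>) \<partial>M) + ennreal (1 - p) * (\<integral>\<^sup>+\<omega>. m0 (Z \<omega>) \<partial>M) + ennreal (H * a / p)"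
      using int_m by (rule add_right_mono)
    also have "\<dots> \<le> exp_loss M b Y Z h + ennreal H + ennreal (H * c / (1 - p))"
      unfolding int_R[symmetric] int_L[symmetric] by (intro nn_integral_mono pw)
    finally show ?thesis .
  qed
  then have "ennreal (H + H * a / p) \<le> exp_loss M b Y Z h + ennreal (H + H * c / (1 - p))"
    using H0 a0 c0 pp by (simp add: ennreal_plus add.assoc)
  then have "ennreal ((H + H * a / p) - (H + H * c / (1 - p))) \<le> exp_loss M b Y Z h"
    by (rule ennreal_sub_le) (use H0 c0 pp in simp)
  moreover have "(H + H * a / p) - (H + H * c / (1 - p)) = H * (a / p - c / (1 - p))"
    by (simp add: algebra_simps)
  ultimately have "ennreal (H * (a / p - c / (1 - p))) \<le> exp_loss M b Y Z h" by simp
  then show ?thesis unfolding H_def p_def a_def c_def .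
qed

lemma int_bool_distr:
  fixes G :: "bool \<Rightarrow> real"
  assumes P: "prob_space M" and Y[measurable]: "Y \<in> M \<rightarrow>\<^sub>M count_space UNIV"
  shows "(\<integral>y. G y \<partial>distr M (count_space UNIV) Y) =
     measure M {\<omega>\<in>space M. Y \<omega>} * G True + measure M {\<omega>\<in>space M. \<not> Y \<omega>} * G False"
proof -
  have "distr M (count_space UNIV) Y = density (count_space UNIV) (\<lambda>x. ennreal (measure M {\<omega>\<in>space M. Y \<omega> = x}))"
    using distributed_count_UNIV[OF P Y] by (simp add: distributed_def)
  then have "(\<integral>y. G y \<partial>distr M (count_space UNIV) Y) = (\<integral>y. measure M {\<omega>\<in>space M. Y \<omega> = y} *\<^sub>R G y \<partial>count_space UNIV)"
    by (simp add: integral_density)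
  also have "\<dots> = measure M {\<omega>\<in>space M. Y \<omega>} * G True + measure M {\<omega>\<in>space M. \<not> Y \<omega>} * G False"
    by (simp add: lebesgue_integral_count_space_finite UNIV_bool)
  finally show ?thesis .
qed

lemma bin_ent_pos:
  fixes x b :: real assumes "0 < x" "x < 1" "1 < b"
  shows "0 < - (x * log b x + (1 - x) * log b (1 - x))"
proof -
  have "log b x < 0" "log b (1 - x) < 0" using assms by simp_all
  then have "x * log b x < 0" "(1 - x) * log b (1 - x) < 0" using assms by (simp_all add: mult_pos_neg)
  then show ?thesis by simp
qed

lemma xlog_div:
  fixes x c b :: real assumes "0 \<le> x" "0 < c"
  shows "c * ((x / c) * log b (x / c)) = x * log b x - x * log b c"
proof (cases "x = 0")
  case False
  then have "0 < x" using assms by simp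
  then show ?thesis using assms by (simp add: log_divide_pos algebra_simps)
qed simp

lemma part2_yhat:
  fixes Y :: "'w \<Rightarrow> bool" and Z :: "'w \<Rightarrow> 'z"
  assumes info: "information_space M b" and Z[measurable]: "Z \<in> M \<rightarrow>\<^sub>M MZ"
    and Y[measurable]: "Y \<in> M \<rightarrow>\<^sub>M count_space UNIV"
    and mi: "prob_space.mutual_information M b (count_space UNIV) MZ Y Z = prob_space.entropy M b (count_space UNIV) Y"
  shows "\<exists>yh. yh \<in> MZ \<rightarrow>\<^sub>M count_space UNIV \<and> (AE \<omega> in M. Y \<omega> = yh (Z \<omega>))"
proof -
  interpret information_space M b by fact
  define S where "S = {\<omega>\<in>space M. Y \<omega>}"
  define p where "p = prob S"
  have S[measurable]: "S \<in> sets M" unfolding S_def by measurable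
  have S0: "space M - S = {\<omega>\<in>space M. \<not> Y \<omega>}" unfolding S_def by auto
  have pS0: "prob {\<omega>\<in>space M. \<not> Y \<omega>} = 1 - p" unfolding p_def S0[symmetric] by (rule prob_compl[OF S])
  consider "p = 0" | "p = 1" | "0 < p" "p < 1" using measure_nonneg[of M S] prob_le_1[of S] unfolding p_def by linarith
  then show ?thesis
  proof cases
    case 1
    have "AE \<omega> in M. \<omega> \<notin> S" using 1 prob_eq_0[OF S] unfolding p_def by simp
    with AE_space have "AE \<omega> in M. Y \<omega> = (\<lambda>_. False) (Z \<omega>)" by eventually_elim (auto simp: S_def)
    then show ?thesis by (intro exI[of _ "\<lambda>_. False"]) simp
  next
    case 2
    have "prob (space M - S) = 0" using 2 S0 pS0 by simp
    then have "AE \<omega> in M. \<omega> \<notin> space M - S" using prob_eq_0[of "space M - S"] by simp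
    with AE_space have "AE \<omega> in M. Y \<omega> = (\<lambda>_. True) (Z \<omega>)" by eventually_elim (auto simp: S_def)
    then show ?thesis by (intro exI[of _ "\<lambda>_. True"]) simp
  next
    case 3
    note pp0 = 3
    obtain r where r[measurable]: "r \<in> borel_measurable MZ" and r01: "\<And>z. 0 \<le> r z \<and> r z \<le> 1"
      and r1: "\<And>\<phi>. \<phi> \<in> borel_measurable MZ \<Longrightarrow>
         (\<integral>\<^sup>+\<omega>. indicator S \<omega> * \<phi> (Z \<omega>) \<partial>M) = (\<integral>\<^sup>+z. ennreal (r z) * \<phi> z \<partial>distr M MZ Z)"
      and r0: "\<And>\<phi>. \<phi> \<in> borel_measurable MZ \<Longrightarrow>
         (\<integral>\<^sup>+\<omega>. indicator (space M - S) \<omega> * \<phi> (Z \<omega>) \<partial>M) = (\<integral>\<^sup>+z. ennreal (1 - r z) * \<phi> z \<partial>distr M MZ Z)"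
      using cp_density[OF prob_space_axioms Z S] by blast
    define \<mu> where "\<mu> = distr M MZ Z"
    define PY where "PY = distr M (count_space UNIV) Y"
    define P where "P = PY \<Otimes>\<^sub>M \<mu>"
    define Q where "Q = distr M (count_space UNIV \<Otimes>\<^sub>M MZ) (\<lambda>x. (Y x, Z x))"
    define D where "D x = (if fst x then r (snd x) / p else (1 - r (snd x)) / (1 - p))" for x
    interpret mu: prob_space \<mu> unfolding \<mu>_def by (rule prob_space_distr) simp
    interpret PY: prob_space PY unfolding PY_def by (rule prob_space_distr) simp
    interpret pp: pair_prob_space PY \<mu> by standard
    have setsP: "sets P = sets (count_space UNIV \<Otimes>\<^sub>M MZ)" unfolding P_def \<mu>_def PY_def
      by (rule sets_pair_measure_cong) simp_all
    have bmP: "borel_measurable P = borel_measurable (count_space UNIV \<Otimes>\<^sub>M MZ)"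
      by (rule measurable_cong_sets[OF setsP refl])
    have bmmu: "borel_measurable \<mu> = borel_measurable MZ"
      by (rule measurable_cong_sets) (simp_all add: \<mu>_def)
    have Dm[measurable]: "D \<in> borel_measurable (count_space UNIV \<Otimes>\<^sub>M MZ)" unfolding D_def by measurable
    have D0: "0 \<le> D x" for x using r01[of "snd x"] pp0 unfolding D_def by auto
    have intP: "(\<integral>\<^sup>+x. g x \<partial>P) = (\<integral>\<^sup>+z. ennreal p * g (True, z) + ennreal (1 - p) * g (False, z) \<partial>\<mu>)"
      if g: "g \<in> borel_measurable (count_space UNIV \<Otimes>\<^sub>M MZ)" for g
    proof -
      have g': "g \<in> borel_measurable (count_space UNIV \<Otimes>\<^sub>M \<mu>)"
        using g measurable_cong_sets[OF sets_pair_measure_cong[of "count_space UNIV" "count_space UNIV" \<mu> MZ] refl]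
        by (simp add: \<mu>_def)
      show ?thesis unfolding P_def PY_def
        using nn_int_pair_bool1[OF prob_space_axioms Y mu.sigma_finite_measure_axioms g'] pS0 unfolding p_def S_def by simp
    qed
    have intQ: "(\<integral>\<^sup>+x. g x \<partial>Q) = (\<integral>\<^sup>+z. ennreal (r z) * g (True, z) + ennreal (1 - r z) * g (False, z) \<partial>\<mu>)"
      if g[measurable]: "g \<in> borel_measurable (count_space UNIV \<Otimes>\<^sub>M MZ)" for g
    proof -
      have "(\<integral>\<^sup>+x. g x \<partial>Q) = (\<integral>\<^sup>+\<omega>. g (Y \<omega>, Z \<omega>) \<partial>M)"
        unfolding Q_def by (rule nn_integral_distr) simp_all
      also have "\<dots> = (\<integral>\<^sup>+\<omega>. indicator S \<omega> * g (True, Z \<omega>) + indicator (space M - S) \<omega> * g (False, Z \<omega>) \<partial>M)"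
        by (intro nn_integral_cong) (auto simp: S_def split: split_indicator)
      also have "\<dots> = (\<integral>\<^sup>+\<omega>. indicator S \<omega> * g (True, Z \<omega>) \<partial>M) + (\<integral>\<^sup>+\<omega>. indicator (space M - S) \<omega> * g (False, Z \<omega>) \<partial>M)"
        by (rule nn_integral_add) measurable
      also have "\<dots> = (\<integral>\<^sup>+z. ennreal (r z) * g (True, z) \<partial>\<mu>) + (\<integral>\<^sup>+z. ennreal (1 - r z) * g (False, z) \<partial>\<mu>)"
      proof -
        have m1: "(\<lambda>z. g (True, z)) \<in> borel_measurable MZ" and m0: "(\<lambda>z. g (False, z)) \<in> borel_measurable MZ"
          by measurable
        show ?thesis unfolding \<mu>_def using r1[OF m1] r0[OF m0] by simp
      qed
      also have "\<dots> = (\<integral>\<^sup>+z. ennreal (r z) * g (True, z) + ennreal (1 - r z) * g (False, z) \<partial>\<mu>)"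
        unfolding \<mu>_def by (rule nn_integral_add[symmetric]) simp_all
      finally show ?thesis .
    qed
    have QD: "Q = density P D"
    proof (rule measure_eqI)
      show "sets Q = sets (density P D)" using setsP by (simp add: Q_def)
      fix E assume "E \<in> sets Q"
      then have E[measurable]: "E \<in> sets (count_space UNIV \<Otimes>\<^sub>M MZ)" by (simp add: Q_def)
      have "emeasure Q E = (\<integral>\<^sup>+x. indicator E x \<partial>Q)" by (simp add: Q_def)
      also have "\<dots> = (\<integral>\<^sup>+z. ennreal (r z) * indicator E (True, z) + ennreal (1 - r z) * indicator E (False, z) \<partial>\<mu>)"
        by (rule intQ) measurable
      also have "\<dots> = (\<integral>\<^sup>+z. ennreal p * (ennreal (D (True, z)) * indicator E (True, z)) + ennreal (1 - p) * (ennreal (D (False, z)) * indicator E (False, z)) \<partial>\<mu>)"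
      proof (intro nn_integral_cong)
        fix z
        have e1: "ennreal p * ennreal (D (True, z)) = ennreal (r z)"
          using pp0 r01[of z] by (simp add: D_def ennreal_mult[symmetric])
        have e2: "ennreal (1 - p) * ennreal (D (False, z)) = ennreal (1 - r z)"
          using pp0 r01[of z] by (simp add: D_def ennreal_mult[symmetric])
        show "ennreal (r z) * indicator E (True, z) + ennreal (1 - r z) * indicator E (False, z) =
           ennreal p * (ennreal (D (True, z)) * indicator E (True, z)) + ennreal (1 - p) * (ennreal (D (False, z)) * indicator E (False, z))"
          by (simp add: mult.assoc[symmetric] e1 e2)
      qed
      also have "\<dots> = (\<integral>\<^sup>+x. ennreal (D x) * indicator E x \<partial>P)"
        by (rule intP[symmetric]) measurable
      also have "\<dots> = emeasure (density P D) E"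
        using Dm E by (subst emeasure_density) (simp_all add: bmP setsP)
      finally show "emeasure Q E = emeasure (density P D) E" .
    qed
    define K where "K = 1 / p + 1 / (1 - p)"
    have DK: "D x \<le> K" for x
    proof -
      have h: "r (snd x) / p \<le> 1 / p" "(1 - r (snd x)) / (1 - p) \<le> 1 / (1 - p)"
        using r01[of "snd x"] pp0 by (simp_all add: divide_right_mono)
      have h3: "0 \<le> 1 / p" and h4: "0 \<le> 1 / (1 - p)" using pp0 by simp_all
      have "D x \<le> 1 / p \<or> D x \<le> 1 / (1 - p)" unfolding D_def using h by auto
      then show ?thesis unfolding K_def using h3 h4 by linarith
    qed
    define F where "F x = D x * log b (D x)" for x
    have Fm[measurable]: "F \<in> borel_measurable (count_space UNIV \<Otimes>\<^sub>M MZ)" unfolding F_def by measurable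
    have Fb: "\<bar>F x\<bar> \<le> (1 + K^2) / ln b" for x
    proof -
      have "\<bar>D x * log b (D x)\<bar> \<le> (1 + (D x)^2) / ln b" by (rule xlog_bound[OF D0 b_gt_1])
      also have "\<dots> \<le> (1 + K^2) / ln b"
        using D0[of x] DK[of x] b_gt_1 by (intro divide_right_mono add_left_mono power_mono) auto
      finally show ?thesis unfolding F_def .
    qed
    have FmP: "F \<in> borel_measurable P" using Fm by (simp add: bmP)
    have intF: "integrable P F" unfolding P_def
      by (rule pp.integrable_const_bound[where B="(1 + K^2) / ln b"]) (use Fb FmP[unfolded P_def] in auto)
    have "KL_divergence b P Q = entropy b (count_space UNIV) Y"
      using mi unfolding mutual_information_def P_def \<mu>_def PY_def Q_def .
    moreover have "KL_divergence b P Q = (\<integral>x. F x \<partial>P)"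
    proof -
      have DmP: "D \<in> borel_measurable P" using Dm by (simp add: bmP)
      show ?thesis unfolding QD F_def P_def
        by (rule pp.KL_density[OF b_gt_1]) (use DmP[unfolded P_def] D0 in auto)
    qed
    moreover have "(\<integral>x. F x \<partial>P) = (\<integral>y. (\<integral>z. F (y, z) \<partial>\<mu>) \<partial>PY)"
      unfolding P_def by (rule pp.integral_fst'[symmetric]) (use intF in \<open>simp add: P_def\<close>)
    moreover have "(\<integral>y. (\<integral>z. F (y, z) \<partial>\<mu>) \<partial>PY) = p * (\<integral>z. F (True, z) \<partial>\<mu>) + (1 - p) * (\<integral>z. F (False, z) \<partial>\<mu>)"
      unfolding PY_def using int_bool_distr[OF prob_space_axioms Y] pS0 unfolding p_def S_def by simp
    ultimately have KLeq: "entropy b (count_space UNIV) Y = p * (\<integral>z. F (True, z) \<partial>\<mu>) + (1 - p) * (\<integral>z. F (False, z) \<partial>\<mu>)"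
      by simp
    have Hent: "entropy b (count_space UNIV) Y = - (p * log b p + (1 - p) * log b (1 - p))"
      using entropy_bool[OF info Y] pS0 unfolding p_def S_def by simp
    define g where "g z = - (r z * log b (r z) + (1 - r z) * log b (1 - r z))" for z
    have gm[measurable]: "g \<in> borel_measurable MZ" unfolding g_def by measurable
    have g0: "0 \<le> g z" for z
    proof -
      have "r z * log b (r z) \<le> 0"
        using r01[of z] b_gt_1 by (cases "r z = 0") (auto intro!: mult_nonneg_nonpos)
      moreover have "(1 - r z) * log b (1 - r z) \<le> 0"
        using r01[of z] b_gt_1 by (cases "r z = 1") (auto intro!: mult_nonneg_nonpos)
      ultimately show ?thesis unfolding g_def by simp
    qed
    have gb: "\<bar>g z\<bar> \<le> 2 * 2 / ln b" for z
    proof -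
      have "\<bar>r z * log b (r z)\<bar> \<le> (1 + (r z)^2) / ln b" by (rule xlog_bound) (use r01[of z] b_gt_1 in auto)
      also have "\<dots> \<le> 2 / ln b" using r01[of z] b_gt_1 by (intro divide_right_mono) (auto simp: power_le_one)
      finally have a1: "\<bar>r z * log b (r z)\<bar> \<le> 2 / ln b" .
      have "\<bar>(1 - r z) * log b (1 - r z)\<bar> \<le> (1 + (1 - r z)^2) / ln b" by (rule xlog_bound) (use r01[of z] b_gt_1 in auto)
      also have "\<dots> \<le> 2 / ln b" using r01[of z] b_gt_1 by (intro divide_right_mono) (auto simp: power_le_one)
      finally have a2: "\<bar>(1 - r z) * log b (1 - r z)\<bar> \<le> 2 / ln b" .
      show ?thesis unfolding g_def using a1 a2 by simp
    qed
    have intg: "integrable \<mu> g"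
      by (rule mu.integrable_const_bound[where B="2 * 2 / ln b"]) (use gb in \<open>auto simp: bmmu\<close>)
    have intr: "integrable \<mu> r"
      by (rule mu.integrable_const_bound[where B=1]) (use r01 in \<open>auto simp: bmmu\<close>)
    have intFT: "integrable \<mu> (\<lambda>z. F (True, z))"
      by (rule mu.integrable_const_bound[where B="(1 + K^2) / ln b"]) (use Fb in \<open>auto simp: bmmu\<close>)
    have intFF: "integrable \<mu> (\<lambda>z. F (False, z))"
      by (rule mu.integrable_const_bound[where B="(1 + K^2) / ln b"]) (use Fb in \<open>auto simp: bmmu\<close>)
    have rint: "(\<integral>z. r z \<partial>\<mu>) = p"
    proof -
      have "(\<integral>\<^sup>+z. ennreal (r z) \<partial>\<mu>) = (\<integral>\<^sup>+\<omega>. indicator S \<omega> * (\<lambda>_. 1) (Z \<omega>) \<partial>M)"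
        using r1[of "\<lambda>_. 1"] unfolding \<mu>_def by simp
      also have "\<dots> = ennreal p" unfolding p_def by (simp add: emeasure_eq_measure)
      finally have "(\<integral>\<^sup>+z. ennreal (r z) \<partial>\<mu>) = ennreal p" .
      moreover have "(\<integral>z. r z \<partial>\<mu>) = enn2real (\<integral>\<^sup>+z. ennreal (r z) \<partial>\<mu>)"
        by (rule integral_eq_nn_integral) (use r01 in \<open>auto simp: bmmu\<close>)
      ultimately show ?thesis using pp0 by simp
    qed
    have pw: "p * F (True, z) + (1 - p) * F (False, z) = - g z - log b (1 - p) - (log b p - log b (1 - p)) * r z" for z
    proof -
      have "p * F (True, z) = r z * log b (r z) - r z * log b p"
        unfolding F_def D_def using xlog_div[of "r z" p b] r01[of z] pp0 by simp
      moreover have "(1 - p) * F (False, z) = (1 - r z) * log b (1 - r z) - (1 - r z) * log b (1 - p)"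
        unfolding F_def D_def using xlog_div[of "1 - r z" "1 - p" b] r01[of z] pp0 by simp
      ultimately show ?thesis unfolding g_def by (simp add: algebra_simps)
    qed
    have "p * (\<integral>z. F (True, z) \<partial>\<mu>) + (1 - p) * (\<integral>z. F (False, z) \<partial>\<mu>)
        = (\<integral>z. p * F (True, z) + (1 - p) * F (False, z) \<partial>\<mu>)"
      using intFT intFF by simp
    also have "\<dots> = (\<integral>z. - g z - log b (1 - p) - (log b p - log b (1 - p)) * r z \<partial>\<mu>)"
      by (simp only: pw)
    also have "\<dots> = - (\<integral>z. g z \<partial>\<mu>) - log b (1 - p) - (log b p - log b (1 - p)) * p"
      using intg intr rint by (simp add: mu.prob_space)
    finally have "- (\<integral>z. g z \<partial>\<mu>) - log b (1 - p) - (log b p - log b (1 - p)) * p = - (p * log b p + (1 - p) * log b (1 - p))"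
      using KLeq Hent by simp
    then have "(\<integral>z. g z \<partial>\<mu>) = 0" by (simp add: algebra_simps)
    then have "AE z in \<mu>. g z = 0"
      using integral_nonneg_eq_0_iff_AE[OF intg] g0 by simp
    then have AEr: "AE z in \<mu>. r z = 0 \<or> r z = 1"
    proof eventually_elim
      case (elim z)
      show ?case
      proof (rule ccontr)
        assume "\<not> (r z = 0 \<or> r z = 1)"
        then have "0 < r z" "r z < 1" using r01[of z] by auto
        from bin_ent_pos[OF this b_gt_1] elim show False unfolding g_def by simp
      qed
    qed
    define yh where "yh z = (1/2 \<le> r z)" for z
    have yhm[measurable]: "yh \<in> MZ \<rightarrow>\<^sub>M count_space UNIV" unfolding yh_def by measurable
    define E1 where "E1 = {\<omega>\<in>space M. Y \<omega> \<and> \<not> yh (Z \<omega>)}"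
    define E0 where "E0 = {\<omega>\<in>space M. \<not> Y \<omega> \<and> yh (Z \<omega>)}"
    have [measurable]: "E1 \<in> sets M" "E0 \<in> sets M" unfolding E1_def E0_def by measurable
    have "emeasure M E1 = (\<integral>\<^sup>+\<omega>. indicator E1 \<omega> \<partial>M)" by simp
    also have "\<dots> = (\<integral>\<^sup>+\<omega>. indicator S \<omega> * indicator {z\<in>space MZ. \<not> yh z} (Z \<omega>) \<partial>M)"
      by (intro nn_integral_cong) (auto simp: E1_def S_def measurable_space[OF Z] split: split_indicator)
    also have "\<dots> = (\<integral>\<^sup>+z. ennreal (r z) * indicator {z\<in>space MZ. \<not> yh z} z \<partial>\<mu>)"
      unfolding \<mu>_def by (rule r1) measurable
    also have "\<dots> = (\<integral>\<^sup>+z. 0 \<partial>\<mu>)"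
      using AEr by (intro nn_integral_cong_AE) (auto simp: yh_def split: split_indicator elim!: eventually_mono)
    finally have e1: "emeasure M E1 = 0" by simp
    have "emeasure M E0 = (\<integral>\<^sup>+\<omega>. indicator E0 \<omega> \<partial>M)" by simp
    also have "\<dots> = (\<integral>\<^sup>+\<omega>. indicator (space M - S) \<omega> * indicator {z\<in>space MZ. yh z} (Z \<omega>) \<partial>M)"
      by (intro nn_integral_cong) (auto simp: E0_def S_def measurable_space[OF Z] split: split_indicator)
    also have "\<dots> = (\<integral>\<^sup>+z. ennreal (1 - r z) * indicator {z\<in>space MZ. yh z} z \<partial>\<mu>)"
      unfolding \<mu>_def by (rule r0) measurable
    also have "\<dots> = (\<integral>\<^sup>+z. 0 \<partial>\<mu>)"
      using AEr by (intro nn_integral_cong_AE) (auto simp: yh_def split: split_indicator elim!: eventually_mono)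
    finally have e0: "emeasure M E0 = 0" by simp
    have "emeasure M (E1 \<union> E0) \<le> emeasure M E1 + emeasure M E0" by (rule emeasure_subadditive) simp_all
    then have "emeasure M (E1 \<union> E0) = 0" using e1 e0 by simp
    moreover have "{\<omega>\<in>space M. \<not> (Y \<omega> = yh (Z \<omega>))} = E1 \<union> E0" unfolding E1_def E0_def by auto
    ultimately have "AE \<omega> in M. Y \<omega> = yh (Z \<omega>)"
      by (subst AE_iff_measurable[OF _ refl]) simp_all
    then show ?thesis using yhm by blast
  qed
qed

lemma ce_term:
  fixes PT PF b :: real and a :: bool
  assumes b: "1 < b" and nn: "0 \<le> PT" "0 \<le> PF"
  defines "Py \<equiv> PT + PF"
  defines "c \<equiv> (if Py = 0 then 0 else PT / Py)"
  defines "Pa \<equiv> (if a then PT else PF)"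
  shows "ce_loss b a c * ennreal Pa \<le> ennreal (- (Pa * log b (Pa / Py)))"
proof (cases "Pa = 0")
  case True then show ?thesis by simp
next
  case False
  then have Pa: "0 < Pa" using nn unfolding Pa_def by (auto split: if_splits)
  then have Py: "0 < Py" using nn unfolding Py_def Pa_def by (auto split: if_splits)
  show ?thesis
  proof (cases a)
    case True
    then have PT: "0 < PT" using Pa unfolding Pa_def by simp
    have c: "c = PT / Py" "0 < c" using Py PT unfolding c_def by auto
    have "ce_loss b a c * ennreal Pa = ennreal (- log b c) * ennreal PT"
      using True c unfolding ce_loss_def Pa_def by simp
    also have "\<dots> = ennreal (- log b c * PT)" using ennreal_mult''[of PT "- log b c"] PT by simp
    also have "\<dots> = ennreal (- (Pa * log b (Pa / Py)))" using True c unfolding Pa_def by (simp add: mult.commute)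
    finally show ?thesis by simp
  next
    case False
    then have PF: "0 < PF" using Pa unfolding Pa_def by simp
    have c: "c = PT / Py" "c < 1" "1 - c = PF / Py" using Py PF nn unfolding c_def Py_def by (auto simp: field_simps)
    have "ce_loss b a c * ennreal Pa = ennreal (- log b (1 - c)) * ennreal PF"
      using False c unfolding ce_loss_def Pa_def by simp
    also have "\<dots> = ennreal (- log b (1 - c) * PF)" using ennreal_mult''[of PF "- log b (1 - c)"] PF by simp
    also have "\<dots> = ennreal (- (Pa * log b (Pa / Py)))" using False c unfolding Pa_def by (simp add: mult.commute)
    finally show ?thesis by simp
  qed
qed

lemma UNIV_bb: "(UNIV :: (bool \<times> bool) set) = {(True,True),(True,False),(False,True),(False,False)}"
proof -
  have "x \<in> {(True,True),(True,False),(False,True),(False,False)}" for x :: "bool \<times> bool"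
    by (cases x) auto
  then show ?thesis by auto
qed

lemma part2_final:
  fixes A Y :: "'w \<Rightarrow> bool" and Z :: "'w \<Rightarrow> 'z"
  assumes info: "information_space M b" and Z[measurable]: "Z \<in> M \<rightarrow>\<^sub>M MZ"
    and A[measurable]: "A \<in> M \<rightarrow>\<^sub>M count_space UNIV"
    and Y[measurable]: "Y \<in> M \<rightarrow>\<^sub>M count_space UNIV"
    and yh[measurable]: "yh \<in> MZ \<rightarrow>\<^sub>M count_space UNIV"
    and ae: "AE \<omega> in M. Y \<omega> = yh (Z \<omega>)"
  shows "(\<Sqinter>h\<in>rand_predictors MZ. exp_loss M b A Z h)
              \<le> ennreal (prob_space.conditional_entropy M b (count_space UNIV) (count_space UNIV) A Y)"
proof -
  interpret information_space M b by fact
  define Pxy where "Pxy x = prob {\<omega>\<in>space M. (A \<omega>, Y \<omega>) = x}" for x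
  define Py where "Py y = prob {\<omega>\<in>space M. Y \<omega> = y}" for y
  have Pxy0: "0 \<le> Pxy x" for x unfolding Pxy_def by simp
  have Pysum: "Py y = Pxy (True, y) + Pxy (False, y)" for y
  proof -
    have "{\<omega>\<in>space M. Y \<omega> = y} = {\<omega>\<in>space M. (A \<omega>, Y \<omega>) = (True, y)} \<union> {\<omega>\<in>space M. (A \<omega>, Y \<omega>) = (False, y)}"
      by auto
    then show ?thesis unfolding Py_def Pxy_def
      by (simp only:) (rule finite_measure_Union, measurable, auto)
  qed
  define c where "c y = (if Py y = 0 then 0 else Pxy (True, y) / Py y)" for y
  have c01: "0 \<le> c y \<and> c y \<le> 1" for y
    using Pysum[of y] Pxy0[of "(True, y)"] Pxy0[of "(False, y)"] unfolding c_def
    by (auto simp: divide_le_eq_1)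
  define h0 where "h0 z = return borel (c (yh z))" for z
  have h0r: "h0 \<in> rand_predictors MZ"
    unfolding rand_predictors_def h0_def
  proof (intro CollectI conjI ballI)
    show "(\<lambda>z. return borel (c (yh z))) \<in> MZ \<rightarrow>\<^sub>M subprob_algebra borel"
      by (rule measurable_compose[OF _ return_measurable]) measurable
    fix z assume "z \<in> space MZ"
    show "prob_space (return borel (c (yh z)))" by (rule prob_space_return) simp
    show "emeasure (return borel (c (yh z))) {0..1} = 1" using c01[of "yh z"] by simp
  qed
  have "exp_loss M b A Z h0 = (\<integral>\<^sup>+\<omega>. ce_loss b (A \<omega>) (c (yh (Z \<omega>))) \<partial>M)"
    unfolding exp_loss_def h0_def by (intro nn_integral_cong nn_integral_return) simp_all
  also have "\<dots> = (\<integral>\<^sup>+\<omega>. ce_loss b (A \<omega>) (c (Y \<omega>)) \<partial>M)"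
    using ae by (intro nn_integral_cong_AE) (auto elim!: eventually_mono)
  also have "\<dots> = (\<integral>\<^sup>+\<omega>. (\<Sum>x\<in>UNIV. ce_loss b (fst x) (c (snd x)) * indicator {\<omega>\<in>space M. (A \<omega>, Y \<omega>) = x} \<omega>) \<partial>M)"
    apply (intro nn_integral_cong)
    subgoal for \<omega> by (cases "A \<omega>"; cases "Y \<omega>") (simp_all add: UNIV_bb indicator_def)
    done
  also have "\<dots> = (\<Sum>x\<in>UNIV. ce_loss b (fst x) (c (snd x)) * emeasure M {\<omega>\<in>space M. (A \<omega>, Y \<omega>) = x})"
    by (subst nn_integral_sum) (simp_all add: nn_integral_cmult_indicator)
  also have "\<dots> = (\<Sum>x\<in>UNIV. ce_loss b (fst x) (c (snd x)) * ennreal (Pxy x))"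
    unfolding Pxy_def by (simp add: emeasure_eq_measure)
  also have "\<dots> \<le> (\<Sum>x\<in>UNIV. ennreal (- (Pxy x * log b (Pxy x / Py (snd x)))))"
  proof (intro sum_mono)
    fix x :: "bool \<times> bool"
    obtain a y where x: "x = (a, y)" by (cases x)
    have e1: "c y = (if Pxy (True,y) + Pxy (False,y) = 0 then 0 else Pxy (True,y) / (Pxy (True,y) + Pxy (False,y)))"
      unfolding c_def Pysum[of y] ..
    have e2: "Pxy (a, y) = (if a then Pxy (True, y) else Pxy (False, y))" by simp
    show "ce_loss b (fst x) (c (snd x)) * ennreal (Pxy x) \<le> ennreal (- (Pxy x * log b (Pxy x / Py (snd x))))"
      unfolding x fst_conv snd_conv e1 e2 Pysum[of y]
      by (rule ce_term[OF b_gt_1 Pxy0[of "(True, y)"] Pxy0[of "(False, y)"]])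
  qed
  also have "\<dots> = ennreal (- (\<Sum>x\<in>UNIV. Pxy x * log b (Pxy x / Py (snd x))))"
  proof -
    have t0: "0 \<le> - (Pxy x * log b (Pxy x / Py (snd x)))" for x
    proof (cases "Pxy x = 0")
      case False
      obtain a y where x: "x = (a, y)" by (cases x)
      have le: "Pxy x \<le> Py (snd x)" using Pysum[of y] Pxy0[of "(True, y)"] Pxy0[of "(False, y)"] x
        by (cases a) auto
      have "0 < Pxy x" using False Pxy0[of x] by simp
      then have "log b (Pxy x / Py (snd x)) \<le> 0" using le b_gt_1 by simp
      then show ?thesis using Pxy0[of x] by (simp add: mult_nonneg_nonpos)
    qed simp
    show ?thesis using t0 by (simp add: sum_negf[symmetric])
  qed
  also have "\<dots> = ennreal (conditional_entropy b (count_space UNIV) (count_space UNIV) A Y)"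
    using cond_entropy_bool[OF info A Y] unfolding Pxy_def Py_def by simp
  finally have "exp_loss M b A Z h0 \<le> ennreal (conditional_entropy b (count_space UNIV) (count_space UNIV) A Y)" .
  then show ?thesis using h0r by (meson INF_lower2)
qed

theorem corollary1:
  fixes M :: "'w measure" and b :: real
    and MX :: "'x measure" and MS :: "'s measure" and MZ :: "'z measure"
    and X :: "'w \<Rightarrow> 'x" and S :: "'w \<Rightarrow> 's" and A Y :: "'w \<Rightarrow> bool"
    and fA fY :: "'x \<Rightarrow> bool" and g :: "'x \<times> 's \<Rightarrow> 'z" and Z :: "'w \<Rightarrow> 'z"
  assumes info: "information_space M b"
    and X_meas: "X \<in> M \<rightarrow>\<^sub>M MX"
    and S_meas: "S \<in> M \<rightarrow>\<^sub>M MS"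
    and fA_meas: "fA \<in> MX \<rightarrow>\<^sub>M count_space UNIV"
    and fY_meas: "fY \<in> MX \<rightarrow>\<^sub>M count_space UNIV"
    and A_def: "\<forall>\<omega>\<in>space M. A \<omega> = fA (X \<omega>)"
    and Y_def: "\<forall>\<omega>\<in>space M. Y \<omega> = fY (X \<omega>)"
    and S_indep: "prob_space.indep_set M
                    {(\<lambda>\<omega>. (X \<omega>, A \<omega>, Y \<omega>)) -` B \<inter> space M | B.
                       B \<in> sets (MX \<Otimes>\<^sub>M (count_space UNIV \<Otimes>\<^sub>M count_space UNIV))}
                    {S -` B \<inter> space M | B. B \<in> sets MS}"
    and g_meas: "g \<in> MX \<Otimes>\<^sub>M MS \<rightarrow>\<^sub>M MZ"
    and Z_def: "\<forall>\<omega>\<in>space M. Z \<omega> = g (X \<omega>, S \<omega>)"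
  shows "(prob_space.mutual_information M b MZ (count_space UNIV) Z A = 0 \<longrightarrow>
            (\<Sqinter>h\<in>rand_predictors MZ. exp_loss M b Y Z h)
              \<ge> ennreal (Delta_YA M A Y * prob_space.entropy M b (count_space UNIV) A))
       \<and> (prob_space.mutual_information M b (count_space UNIV) MZ Y Z
              = prob_space.entropy M b (count_space UNIV) Y \<longrightarrow>
            (\<Sqinter>h\<in>rand_predictors MZ. exp_loss M b A Z h)
              \<le> ennreal (prob_space.conditional_entropy M b (count_space UNIV) (count_space UNIV) A Y))"
proof -
  interpret information_space M b by fact
  have Am[measurable]: "A \<in> M \<rightarrow>\<^sub>M count_space UNIV"
    by (rule measurable_cong[THEN iffD2, of _ _ "\<lambda>\<omega>. fA (X \<omega>)"])
       (use A_def in simp, rule measurable_compose[OF X_meas fA_meas])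
  have Ym[measurable]: "Y \<in> M \<rightarrow>\<^sub>M count_space UNIV"
    by (rule measurable_cong[THEN iffD2, of _ _ "\<lambda>\<omega>. fY (X \<omega>)"])
       (use Y_def in simp, rule measurable_compose[OF X_meas fY_meas])
  have Zm[measurable]: "Z \<in> M \<rightarrow>\<^sub>M MZ"
    by (rule measurable_cong[THEN iffD2, of _ _ "\<lambda>\<omega>. g (X \<omega>, S \<omega>)"])
       (use Z_def in simp, rule measurable_compose[OF measurable_Pair[OF X_meas S_meas] g_meas])
  define p where "p = prob {\<omega>\<in>space M. A \<omega>}"
  define q where "q = prob {\<omega>\<in>space M. \<not> A \<omega>}"
  define a where "a = prob {\<omega>\<in>space M. Y \<omega> \<and> A \<omega>}"
  define c where "c = prob {\<omega>\<in>space M. Y \<omega> \<and> \<not> A \<omega>}"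
  define H where "H = - (p * log b p + q * log b q)"
  have SA[measurable]: "{\<omega>\<in>space M. A \<omega>} \<in> sets M" by measurable
  have q1p: "q = 1 - p"
  proof -
    have "{\<omega>\<in>space M. \<not> A \<omega>} = space M - {\<omega>\<in>space M. A \<omega>}" by auto
    then show ?thesis unfolding q_def p_def using prob_compl[OF SA] by simp
  qed
  have HA: "entropy b (count_space UNIV) A = H"
    unfolding H_def p_def q_def by (rule entropy_bool[OF info Am])
  have Delta: "Delta_YA M A Y = \<bar>c / q - a / p\<bar>"
    unfolding Delta_YA_def cond_prob_def a_def c_def p_def q_def by simp
  have part1: "ennreal (Delta_YA M A Y * H) \<le> (\<Sqinter>h\<in>rand_predictors MZ. exp_loss M b Y Z h)"
    if mi: "mutual_information b MZ (count_space UNIV) Z A = 0"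
  proof (cases "0 < p \<and> p < 1")
    case False
    then have "p = 0 \<or> p = 1" using measure_nonneg[of M "{\<omega>\<in>space M. A \<omega>}"] prob_le_1[of "{\<omega>\<in>space M. A \<omega>}"]
      unfolding p_def by linarith
    then have "H = 0" unfolding H_def using q1p by auto
    then show ?thesis by simp
  next
    case True
    then have pp: "0 < p" "p < 1" by auto
    have ind: "(\<integral>\<^sup>+\<omega>. indicator {\<omega>\<in>space M. A \<omega> = e} \<omega> * \<phi> (Z \<omega>) \<partial>M)
           = ennreal (measure M {\<omega>\<in>space M. A \<omega> = e}) * (\<integral>\<^sup>+\<omega>. \<phi> (Z \<omega>) \<partial>M)"
      if "\<phi> \<in> borel_measurable MZ" for e \<phi>
      by (rule mi0_indep[OF info Zm Am _ _ mi that]) (use pp in \<open>simp_all add: p_def\<close>)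
    have indn: "(\<integral>\<^sup>+\<omega>. indicator {\<omega>\<in>space M. (\<not> A \<omega>) = e} \<omega> * \<phi> (Z \<omega>) \<partial>M)
           = ennreal (measure M {\<omega>\<in>space M. (\<not> A \<omega>) = e}) * (\<integral>\<^sup>+\<omega>. \<phi> (Z \<omega>) \<partial>M)"
      if "\<phi> \<in> borel_measurable MZ" for e \<phi>
    proof -
      have "{\<omega>\<in>space M. (\<not> A \<omega>) = e} = {\<omega>\<in>space M. A \<omega> = (\<not> e)}" by auto
      then show ?thesis using ind[OF that, of "\<not> e"] by simp
    qed
    have An: "(\<lambda>\<omega>. \<not> A \<omega>) \<in> M \<rightarrow>\<^sub>M count_space UNIV" by measurable
    have c1: "ennreal (H * (a / p - c / q)) \<le> exp_loss M b Y Z h" if h: "h \<in> rand_predictors MZ" for h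
      using part1_core[OF prob_space_axioms b_gt_1 Zm Am Ym h ind] pp
      unfolding H_def q1p a_def c_def p_def by simp
    have c2: "ennreal (H * (c / q - a / p)) \<le> exp_loss M b Y Z h" if h: "h \<in> rand_predictors MZ" for h
    proof -
      have "ennreal ((- (q * log b q + (1 - q) * log b (1 - q))) * (c / q - a / (1 - q))) \<le> exp_loss M b Y Z h"
        using part1_core[OF prob_space_axioms b_gt_1 Zm An Ym h indn] pp q1p
        unfolding a_def c_def p_def q_def by simp
      moreover have "1 - q = p" using q1p by simp
      ultimately show ?thesis unfolding H_def by (simp add: algebra_simps)
    qed
    have H0: "0 \<le> H"
    proof -
      have "log b p \<le> 0" "log b q \<le> 0" using pp q1p b_gt_1 by simp_all
      then have "p * log b p \<le> 0" "q * log b q \<le> 0" using pp q1p by (simp_all add: mult_nonneg_nonpos)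
      then show ?thesis unfolding H_def by simp
    qed
    show ?thesis
    proof (rule INF_greatest)
      fix h assume h: "h \<in> rand_predictors MZ"
      show "ennreal (Delta_YA M A Y * H) \<le> exp_loss M b Y Z h"
      proof (cases "0 \<le> c / q - a / p")
        case True
        then have e: "Delta_YA M A Y * H = H * (c / q - a / p)" unfolding Delta by simp
        show ?thesis unfolding e by (rule c2[OF h])
      next
        case False
        then have e: "Delta_YA M A Y * H = H * (a / p - c / q)" unfolding Delta by simp
        show ?thesis unfolding e by (rule c1[OF h])
      qed
    qed
  qed
  have part2: "(\<Sqinter>h\<in>rand_predictors MZ. exp_loss M b A Z h)
              \<le> ennreal (conditional_entropy b (count_space UNIV) (count_space UNIV) A Y)"
    if mi: "mutual_information b (count_space UNIV) MZ Y Z = entropy b (count_space UNIV) Y"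
  proof -
    obtain yh where yh: "yh \<in> MZ \<rightarrow>\<^sub>M count_space UNIV" "AE \<omega> in M. Y \<omega> = yh (Z \<omega>)"
      using part2_yhat[OF info Zm Ym mi] by blast
    show ?thesis by (rule part2_final[OF info Zm Am Ym yh])
  qed
  show ?thesis using part1 part2 HA by simp
qed

end
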